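(* For arbitrary $\sigma\ge0$, $\theta\ge0$ and $\omega\ge0$, the second order differential operator $\sigma+\Delta_{\theta,\omega}$ maps $\mathcal P^+$ into itself.
   Context: $D=d/dz$, $\Delta_{\theta,\omega}=(\theta+\omega z)D+zD^2$. $\mathcal P^+$ is the set of complex polynomials of the form $C\prod_{j=1}^m(z+\pi_j)$ with $C\in\mathbb C$, $m\in\mathbb N_0$, $\pi_j\ge0$ (polynomials all of whose zeros are real and nonpositive, including constants). *)

theory Defs
  imports "HOL-Computational_Algebra.Polynomial" Complex_Main
begin

text \<open>The class P+ : polynomials C * prod_j (z + pi_j) with C complex, pi_j real and nonnegative
  (including constants, and the zero polynomial via C = 0).\<close>
definition Pplus :: "complex poly set" where
  "Pplus = {p. \<exists>(C::complex) (rs::real list). (\<forall>r\<in>set rs. r \<ge> 0) \<and>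
               p = smult C (\<Prod>r\<leftarrow>rs. [:complex_of_real r, 1:])}"

definition Delta :: "real \<Rightarrow> real \<Rightarrow> complex poly \<Rightarrow> complex poly" where
  "Delta \<theta> \<omega> p = [:complex_of_real \<theta>, complex_of_real \<omega>:] * pderiv p
                    + [:0, 1:] * pderiv (pderiv p)"

end

theory Submission
  imports Defs "HOL-Computational_Algebra.Fundamental_Theorem_Algebra"
begin


definition Tr :: "real \<Rightarrow> real \<Rightarrow> real \<Rightarrow> real poly \<Rightarrow> real poly" where
  "Tr s t w P = smult s P + [:t, w:] * pderiv P + [:0, 1:] * pderiv (pderiv P)"

lemma coeff_Tr:
  "coeff (Tr s t w P) i = (s + w * real i) * coeff P i + (real i + 1) * (t + real i) * coeff P (Suc i)"
  by (cases i) (simp_all add: Tr_def coeff_pderiv mult_pCons_left algebra_simps)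

lemma mp_add: "map_poly (of_real :: real \<Rightarrow> complex) (p + q) = map_poly of_real p + map_poly of_real q"
  by (intro poly_eqI) (simp add: coeff_map_poly)

lemma mp_smult: "map_poly (of_real :: real \<Rightarrow> complex) (smult c p) = smult (of_real c) (map_poly of_real p)"
  by (rule map_poly_smult) auto

lemma mp_mult: "map_poly (of_real :: real \<Rightarrow> complex) (p * q) = map_poly of_real p * map_poly of_real q"
  by (induction p) (simp_all add: mult_pCons_left mp_add mp_smult map_poly_pCons)

lemma mp_pderiv: "map_poly (of_real :: real \<Rightarrow> complex) (pderiv p) = pderiv (map_poly of_real p)"
  by (intro poly_eqI) (simp add: coeff_map_poly coeff_pderiv)

lemma mp_poly: "poly (map_poly (of_real :: real \<Rightarrow> complex) p) (of_real x) = of_real (poly p x)"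
  by (induction p) (auto simp: map_poly_pCons)

lemma mp_pCons: "map_poly (of_real :: real \<Rightarrow> complex) (pCons a p) = pCons (of_real a) (map_poly of_real p)"
  by (simp add: map_poly_pCons)

lemma Tr_commute:
  "smult (complex_of_real s) (smult C (map_poly of_real P)) + Delta t w (smult C (map_poly of_real P))
   = smult C (map_poly of_real (Tr s t w P))"
  by (intro poly_eqI) (simp add: Delta_def Tr_def mp_add mp_smult mp_mult mp_pderiv mp_pCons pderiv_smult
     mult_pCons_left coeff_pCons algebra_simps split: nat.split)



definition nn :: "real poly \<Rightarrow> bool" where "nn p \<longleftrightarrow> (\<forall>i. coeff p i \<ge> 0)"

lemma nn_mult_lin: "nn p \<Longrightarrow> b \<ge> 0 \<Longrightarrow> nn (p * [:b, 1:])"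
  unfolding nn_def
  by (auto simp: mult.commute[of p] mult_pCons_left coeff_pCons split: nat.split)

lemma nn_prod: fixes b :: "nat \<Rightarrow> real" and n :: nat shows "(\<And>j. j < n \<Longrightarrow> b j \<ge> 0) \<Longrightarrow> nn (\<Prod>j<n. [:b j, 1:])"
proof (induction n)
  case 0 then show ?case by (simp add: nn_def coeff_1)
next
  case (Suc n) then show ?case by (simp add: nn_mult_lin del: mult_pCons_right mult_pCons_left)
qed

lemma nn_Tr: "nn P \<Longrightarrow> s \<ge> 0 \<Longrightarrow> t \<ge> 0 \<Longrightarrow> w \<ge> 0 \<Longrightarrow> nn (Tr s t w P)"
  unfolding nn_def coeff_Tr by (auto intro!: add_nonneg_nonneg mult_nonneg_nonneg)

lemma nn_pos: assumes "nn Q" "Q \<noteq> 0" "x > 0" shows "poly Q x > 0"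
proof -
  have "poly Q x = (\<Sum>i\<le>degree Q. coeff Q i * x ^ i)" by (rule poly_altdef)
  also have "\<dots> > 0"
  proof (rule sum_pos2[where i="degree Q"])
    show "0 < coeff Q (degree Q) * x ^ degree Q"
      using assms by (metis nn_def leading_coeff_0_iff order_le_less mult_pos_pos zero_less_power)
  qed (use assms in \<open>auto simp: nn_def\<close>)
  finally show ?thesis .
qed

lemma lag_step:
  fixes R :: "real poly"
  shows "poly (pderiv (R * [:b, 1:])) x ^ 2 - poly (R * [:b, 1:]) x * poly (pderiv (pderiv (R * [:b, 1:]))) x
    = (x + b)^2 * (poly (pderiv R) x ^ 2 - poly R x * poly (pderiv (pderiv R)) x) + poly R x ^ 2"
proof -
  have d1: "pderiv (R * [:b, 1:]) = R + [:b, 1:] * pderiv R"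
    by (simp add: pderiv_mult pderiv_pCons del: mult_pCons_right mult_pCons_left)
  have d2: "pderiv (pderiv (R * [:b, 1:])) = 2 * pderiv R + [:b, 1:] * pderiv (pderiv R)"
    unfolding d1 by (simp add: pderiv_mult pderiv_pCons pderiv_add del: mult_pCons_right mult_pCons_left)
  show ?thesis unfolding d2 unfolding d1
    by (simp add: algebra_simps power2_eq_square del: mult_pCons_right mult_pCons_left)
qed

lemma lag_nonneg: fixes b :: "nat \<Rightarrow> real" and n :: nat shows
  "0 \<le> poly (pderiv (\<Prod>j<n. [:b j, 1:])) x ^ 2 - poly (\<Prod>j<n. [:b j, 1:]) x * poly (pderiv (pderiv (\<Prod>j<n. [:b j, 1:]))) x"
proof (induction n)
  case 0 then show ?case by simp
next
  case (Suc n) then show ?case by (simp only: prod.lessThan_Suc lag_step) simp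
qed

lemma lag_pos: fixes b :: "nat \<Rightarrow> real" and n :: nat
  assumes "n > 0" "poly (\<Prod>j<n. [:b j, 1:]) x \<noteq> 0"
  shows "0 < poly (pderiv (\<Prod>j<n. [:b j, 1:])) x ^ 2 - poly (\<Prod>j<n. [:b j, 1:]) x * poly (pderiv (pderiv (\<Prod>j<n. [:b j, 1:]))) x"
proof -
  obtain m where m: "n = Suc m" using assms by (cases n) auto
  have "poly (\<Prod>j<m. [:b j, 1:]) x \<noteq> 0" using assms m by (auto simp del: mult_pCons_right mult_pCons_left)
  then show ?thesis using lag_nonneg[of b m x] unfolding m
    by (simp only: prod.lessThan_Suc lag_step) (simp add: add_nonneg_pos)
qed



lemma poly_Tr: "poly (Tr s t w P) x = s * poly P x + (t + w * x) * poly (pderiv P) x + x * poly (pderiv (pderiv P)) x"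
  by (simp add: Tr_def algebra_simps)

lemma poly_linprod: "poly (\<Prod>j<n. [:b j, 1:]) x = (\<Prod>j<n. b j + x)"
  by (simp add: poly_prod)

lemma prod_one_neg:
  fixes f :: "nat \<Rightarrow> real"
  assumes "k < n" "f k < 0" "\<And>i. i < n \<Longrightarrow> i \<noteq> k \<Longrightarrow> f i > 0"
  shows "(\<Prod>i<n. f i) < 0"
proof -
  have "(\<Prod>i<n. f i) = f k * (\<Prod>i\<in>{..<n} - {k}. f i)"
    using assms by (simp add: prod.remove)
  moreover have "(\<Prod>i\<in>{..<n} - {k}. f i) > 0" using assms by (intro prod_pos) auto
  ultimately show ?thesis using assms by (simp add: mult_neg_pos)
qed

lemma neg_from_prod: "(x::real) * y > 0 \<Longrightarrow> y < 0 \<Longrightarrow> x < 0"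
  by (auto simp: zero_less_mult_iff)

lemma simple_roots:
  fixes b :: "nat \<Rightarrow> real" and n :: nat and s t w :: real
  assumes mono: "\<And>i j. i < j \<Longrightarrow> j < n \<Longrightarrow> b i < b j" and pos: "\<And>i. i < n \<Longrightarrow> b i > 0"
    and st: "s \<ge> 0" "t \<ge> 0" "w \<ge> 0"
  shows "\<exists>S. finite S \<and> card S \<ge> n - 1 \<and> (\<forall>x\<in>S. poly (Tr s t w (\<Prod>j<n. [:b j, 1:])) x = 0)"
proof (cases "n \<le> 1")
  case True then show ?thesis by (intro exI[of _ "{}"]) auto
next
  case False
  have n2: "1 < n" using False by simp
  define P where "P = (\<Prod>j<n. [:b j, 1:])"
  define Q where "Q = Tr s t w P"
  have monole: "b i \<le> b j" if "i \<le> j" "j < n" for i j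
    using mono[of i j] that by (cases "i = j") auto
  have Proot: "poly P (- b i) = 0" if "i < n" for i
    unfolding P_def poly_linprod using that by (intro prod_zero) auto
  have ex1: "\<exists>x. j < n - 1 \<longrightarrow> - b (Suc j) < x \<and> x < - b j \<and> poly (pderiv P) x = 0" if j: "j < n - 1" for j
  proof -
    have lt: "- b (Suc j) < - b j" using mono[of j "Suc j"] j by auto
    from poly_MVT[OF lt, of P] obtain x where x: "- b (Suc j) < x" "x < - b j"
      "poly P (- b j) - poly P (- b (Suc j)) = (- b j - - b (Suc j)) * poly (pderiv P) x" by blast
    have "poly (pderiv P) x = 0" using x(3) Proot[of j] Proot[of "Suc j"] j lt by auto
    then show "\<exists>x. j < n - 1 \<longrightarrow> - b (Suc j) < x \<and> x < - b j \<and> poly (pderiv P) x = 0" using x by blast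
  qed
  have "\<forall>j. \<exists>x. j < n - 1 \<longrightarrow> - b (Suc j) < x \<and> x < - b j \<and> poly (pderiv P) x = 0"
    using ex1 by blast
  then obtain tt where tt: "\<And>j. j < n - 1 \<Longrightarrow> - b (Suc j) < tt j \<and> tt j < - b j \<and> poly (pderiv P) (tt j) = 0"
    by metis
  have sgn_neg: "b i + tt j < 0" if "j < n - 1" "i \<le> j" for i j
  proof -
    have "b i \<le> b j" using monole[of i j] that by auto
    then show ?thesis using tt[OF that(1)] by auto
  qed
  have sgn_pos: "b i + tt j > 0" if "j < n - 1" "j < i" "i < n" for i j
    using tt[OF that(1)] monole[of "Suc j" i] that by auto
  have Pne: "poly P (tt j) \<noteq> 0" if "j < n - 1" for j
  proof -
    have "b i + tt j \<noteq> 0" if "i < n" for i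
      using sgn_neg[OF \<open>j < n - 1\<close>, of i] sgn_pos[OF \<open>j < n - 1\<close>, of i] that by (cases "i \<le> j") auto
    then have "(\<Prod>i<n. b i + tt j) \<noteq> 0" by (simp add: prod_zero_iff)
    then show ?thesis unfolding P_def poly_linprod .
  qed
  have ttneg: "tt j < 0" if "j < n - 1" for j
  proof -
    have "b j > 0" using pos[of j] that by simp
    then show ?thesis using tt[OF that] by auto
  qed
  have QP: "poly Q (tt j) * poly P (tt j) > 0" if j: "j < n - 1" for j
  proof -
    have L: "0 < poly (pderiv P) (tt j) ^ 2 - poly P (tt j) * poly (pderiv (pderiv P)) (tt j)"
      unfolding P_def by (rule lag_pos) (use False Pne[OF j] in \<open>auto simp: P_def\<close>)
    have PP: "poly P (tt j) * poly (pderiv (pderiv P)) (tt j) < 0" using L tt[OF j] by simp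
    have "poly Q (tt j) * poly P (tt j) = s * poly P (tt j) ^ 2 + tt j * (poly P (tt j) * poly (pderiv (pderiv P)) (tt j))"
      unfolding Q_def poly_Tr using tt[OF j] by (simp add: algebra_simps power2_eq_square)
    moreover have "tt j * (poly P (tt j) * poly (pderiv (pderiv P)) (tt j)) > 0"
      using PP ttneg[OF j] by (simp add: mult_neg_neg)
    moreover have "s * poly P (tt j) ^ 2 \<ge> 0" using st by simp
    ultimately show ?thesis by linarith
  qed
  have alt: "poly P (tt j) * poly P (tt (Suc j)) < 0" if j: "Suc j < n - 1" for j
  proof -
    have "poly P (tt j) * poly P (tt (Suc j)) = (\<Prod>i<n. (b i + tt j) * (b i + tt (Suc j)))"
      unfolding P_def poly_linprod by (simp add: prod.distrib)
    also have "\<dots> < 0"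
    proof (rule prod_one_neg[where k="Suc j"])
      show "Suc j < n" using j by simp
      show "(b (Suc j) + tt j) * (b (Suc j) + tt (Suc j)) < 0"
        using sgn_pos[of j "Suc j"] sgn_neg[of "Suc j" "Suc j"] j by (simp add: mult_pos_neg)
      fix i assume i: "i < n" "i \<noteq> Suc j"
      show "(b i + tt j) * (b i + tt (Suc j)) > 0"
      proof (cases "i \<le> j")
        case True then show ?thesis using sgn_neg[of j i] sgn_neg[of "Suc j" i] j by (simp add: mult_neg_neg)
      next
        case False then show ?thesis using sgn_pos[of j i] sgn_pos[of "Suc j" i] j i by (simp add: mult_pos_pos)
      qed
    qed
    finally show ?thesis .
  qed
  have P0: "poly P (tt 0) < 0"
  proof -
    have "poly P (tt 0) = (\<Prod>i<n. b i + tt 0)" unfolding P_def poly_linprod ..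
    also have "\<dots> < 0"
      by (rule prod_one_neg[where k=0]) (use False sgn_neg[of 0 0] sgn_pos[of 0] in auto)
    finally show ?thesis .
  qed
  have nnQ: "nn Q" unfolding Q_def P_def
    by (intro nn_Tr nn_prod st) (use pos in \<open>auto intro: less_imp_le\<close>)
  have ex2: "\<exists>x. j < n - 1 \<longrightarrow> poly Q x = 0 \<and> tt j < x \<and> (j = 0 \<longrightarrow> x \<le> 0) \<and> (j > 0 \<longrightarrow> x < tt (j - 1))" if j: "j < n - 1" for j
  proof -
    show "\<exists>x. j < n - 1 \<longrightarrow> poly Q x = 0 \<and> tt j < x \<and> (j = 0 \<longrightarrow> x \<le> 0) \<and> (j > 0 \<longrightarrow> x < tt (j - 1))"
    proof (cases j)
      case 0
      have Qt: "poly Q (tt 0) < 0" using QP[of 0] P0 j 0 by (simp add: zero_less_mult_iff)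
      have Q0: "poly Q 0 \<ge> 0" using nnQ by (simp add: nn_def poly_0_coeff_0)
      show ?thesis
      proof (cases "poly Q 0 = 0")
        case True then show ?thesis using ttneg[of 0] j 0 by auto
      next
        case False
        then have Qp: "poly Q 0 > 0" using Q0 by simp
        have t0: "tt 0 < 0" using ttneg[of 0] n2 by simp
        from poly_IVT_pos[OF t0 Qt Qp] obtain x where "tt 0 < x" "x < 0" "poly Q x = 0" by auto
        then show ?thesis using 0 by auto
      qed
    next
      case (Suc k)
      have k: "Suc k < n - 1" using j Suc by simp
      have A: "poly Q (tt k) * poly P (tt k) > 0" "poly Q (tt (Suc k)) * poly P (tt (Suc k)) > 0"
        using QP[of k] QP[of "Suc k"] k by auto
      have B: "poly P (tt k) * poly P (tt (Suc k)) < 0" using alt[OF k] .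
      have "(poly Q (tt (Suc k)) * poly Q (tt k)) * (poly P (tt k) * poly P (tt (Suc k))) > 0"
        using mult_pos_pos[OF A(1) A(2)] by (simp add: algebra_simps)
      then have QQ: "poly Q (tt (Suc k)) * poly Q (tt k) < 0" using B by (rule neg_from_prod)
      have lt: "tt (Suc k) < tt k" using tt[of k] tt[of "Suc k"] k by auto
      from poly_IVT[OF lt QQ] obtain x where "x > tt (Suc k)" "x < tt k" "poly Q x = 0" by auto
      then show ?thesis using Suc by auto
    qed
  qed
  have "\<forall>j. \<exists>x. j < n - 1 \<longrightarrow> poly Q x = 0 \<and> tt j < x \<and> (j = 0 \<longrightarrow> x \<le> 0) \<and> (j > 0 \<longrightarrow> x < tt (j - 1))"
    using ex2 by blast
  then obtain uu where uu: "\<And>j. j < n - 1 \<Longrightarrow> poly Q (uu j) = 0 \<and> tt j < uu j \<and> (j = 0 \<longrightarrow> uu j \<le> 0) \<and> (j > 0 \<longrightarrow> uu j < tt (j - 1))"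
    by metis
  have ttdec: "tt k < tt i" if "i < k" "k < n - 1" for i k
  proof -
    have "b (Suc i) \<le> b k" using monole[of "Suc i" k] that by simp
    then show ?thesis using tt[of k] tt[of i] that by auto
  qed
  have uudec: "uu k < uu i" if "i < k" "k < n - 1" for i k
  proof -
    have "uu k < tt (k - 1)" using uu[of k] that by auto
    also have "tt (k - 1) \<le> tt i"
    proof (cases "i = k - 1")
      case False
      then have "i < k - 1" "k - 1 < n - 1" using that by auto
      then show ?thesis using ttdec[of i "k - 1"] by simp
    qed simp
    also have "tt i < uu i" using uu[of i] that by auto
    finally show ?thesis .
  qed
  have inj: "inj_on uu {..<n - 1}"
  proof (rule inj_onI)
    fix i k assume "i \<in> {..<n - 1}" "k \<in> {..<n - 1}" "uu i = uu k"
    then show "i = k" using uudec[of i k] uudec[of k i] by (cases i k rule: linorder_cases) auto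
  qed
  show ?thesis
    by (intro exI[of _ "uu ` {..<n - 1}"]) (use inj uu in \<open>auto simp: card_image Q_def P_def\<close>)
qed



lemma mp_eq0: "map_poly (of_real :: real \<Rightarrow> complex) Q = 0 \<longleftrightarrow> Q = 0"
  by (rule map_poly_eq_0_iff) auto

lemma mp_degree: "degree (map_poly (of_real :: real \<Rightarrow> complex) Q) = degree Q"
  by (rule degree_map_poly) auto

lemma real_roots_all:
  fixes Q :: "real poly"
  assumes Q: "Q \<noteq> 0" "nn Q" "degree Q \<le> n" and S: "finite S" "card S \<ge> n - 1" "\<forall>x\<in>S. poly Q x = 0"
    and z: "poly (map_poly of_real Q) z = 0"
  shows "Im z = 0 \<and> Re z \<le> 0"
proof -
  define q where "q = (map_poly of_real Q :: complex poly)"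
  have q0: "q \<noteq> 0" using Q by (simp add: q_def mp_eq0)
  have dq: "degree q \<le> n" using Q by (simp add: q_def mp_degree)
  have cnjr: "poly q (cnj x) = cnj (poly q x)" for x
    by (rule poly_cnj_real[symmetric]) (simp add: q_def coeff_map_poly)
  show ?thesis
  proof (cases "Im z = 0")
    case False
    let ?R = "of_real ` S \<union> {z, cnj z}"
    have sub: "?R \<subseteq> {x. poly q x = 0}"
      using S z cnjr[of z] by (auto simp: q_def mp_poly)
    have "card ?R = card (of_real ` S :: complex set) + card {z, cnj z}"
      by (rule card_Un_disjoint) (use S False in \<open>auto simp: complex_eq_iff\<close>)
    moreover have "card (of_real ` S :: complex set) = card S"
      by (rule card_image) (simp add: inj_on_def)
    moreover have "card {z, cnj z} = 2" using False by (simp add: complex_eq_iff)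
    ultimately have "card ?R = card S + 2" by simp
    moreover have "card ?R \<le> card {x. poly q x = 0}"
      by (rule card_mono[OF poly_roots_finite[OF q0] sub])
    moreover have "card {x. poly q x = 0} \<le> degree q" by (rule card_poly_roots_bound[OF q0])
    ultimately show ?thesis using dq S(2) by linarith
  next
    case True
    then have zr: "z = of_real (Re z)" by (simp add: complex_eq_iff)
    have "poly Q (Re z) = 0" using z zr mp_poly[of Q "Re z"] by (metis of_real_eq_0_iff)
    then have "\<not> Re z > 0" using nn_pos[OF Q(2) Q(1)] by force
    then show ?thesis using True by simp
  qed
qed

lemma roots_to_Pplus:
  fixes q :: "complex poly"
  assumes "q \<noteq> 0" "\<And>z. poly q z = 0 \<Longrightarrow> Im z = 0 \<and> Re z \<le> 0"
  shows "\<exists>C rs. (\<forall>r\<in>set rs. r \<ge> 0) \<and> length rs = degree q \<and> q = smult C (\<Prod>r\<leftarrow>rs. [:complex_of_real r, 1:])"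
  using assms
proof (induction "degree q" arbitrary: q)
  case 0
  then show ?case by (intro exI[of _ "coeff q 0"] exI[of _ "[]"]) (simp add: degree_0_id)
next
  case (Suc d)
  have "\<not> constant (poly q)" using Suc(2) constant_degree[of q] by simp
  then obtain z where z: "poly q z = 0" using fundamental_theorem_of_algebra by blast
  then obtain q' where q': "q = [:-z, 1:] * q'" using poly_eq_0_iff_dvd by (metis dvdE)
  have q'0: "q' \<noteq> 0" using Suc(3) q' by auto
  have dq': "degree q' = d" using Suc(2) q' q'0 by (simp add: degree_mult_eq del: mult_pCons_left)
  have "\<exists>C rs. (\<forall>r\<in>set rs. r \<ge> 0) \<and> length rs = degree q' \<and> q' = smult C (\<Prod>r\<leftarrow>rs. [:complex_of_real r, 1:])"
  proof (rule Suc(1))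
    fix y assume "poly q' y = 0"
    then have "poly q y = 0" using q' by simp
    then show "Im y = 0 \<and> Re y \<le> 0" by (rule Suc(4))
  qed (use dq' q'0 in auto)
  then obtain C rs where rs: "\<forall>r\<in>set rs. r \<ge> 0" "length rs = degree q'" "q' = smult C (\<Prod>r\<leftarrow>rs. [:complex_of_real r, 1:])"
    by blast
  have zz: "Im z = 0 \<and> Re z \<le> 0" using Suc(4)[OF z] .
  then have zr: "-z = complex_of_real (- Re z)" by (simp add: complex_eq_iff)
  show ?case
  proof (intro exI[of _ C] exI[of _ "(- Re z) # rs"] conjI)
    show "\<forall>r\<in>set (- Re z # rs). 0 \<le> r" using rs zz by auto
    show "length (- Re z # rs) = degree q" using rs dq' Suc(2) by simp
    show "q = smult C (\<Prod>r\<leftarrow>- Re z # rs. [:complex_of_real r, 1:])"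
      using q' rs(3) zr by (simp add: mult_smult_right del: mult_pCons_left)
  qed
qed

lemma pointwise_bd:
  fixes w :: complex and r :: real
  assumes r: "r \<ge> 0"
  shows "cmod (of_real r + w) \<ge> max \<bar>Im w\<bar> (Re w) / (2 * cmod w + 2) * (1 + r)"
proof -
  define g where "g = max \<bar>Im w\<bar> (Re w)"
  define m where "m = cmod w"
  define A where "A = cmod (of_real r + w)"
  have m0: "m \<ge> 0" by (simp add: m_def)
  have g0: "g \<ge> 0" by (simp add: g_def)
  have gm: "g \<le> m" unfolding g_def m_def using abs_Im_le_cmod complex_Re_le_cmod by auto
  have A1: "A \<ge> g"
  proof -
    have "\<bar>Im w\<bar> \<le> A" using abs_Im_le_cmod[of "of_real r + w"] by (simp add: A_def)
    moreover have "Re w \<le> A" using complex_Re_le_cmod[of "of_real r + w"] r by (simp add: A_def)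
    ultimately show ?thesis by (simp add: g_def)
  qed
  have A2: "A \<ge> r - m"
  proof -
    have "cmod (complex_of_real r) \<le> cmod (of_real r + w) + cmod w"
      using norm_triangle_ineq4[of "of_real r + w" w] by simp
    then show ?thesis using r by (simp add: A_def m_def)
  qed
  have key: "g * (1 + r) \<le> A * (2 * m + 2)"
  proof (cases "r \<le> 2 * m + 1")
    case True
    have "g * (1 + r) \<le> g * (2 * m + 2)" using True g0 by (intro mult_left_mono) auto
    also have "\<dots> \<le> A * (2 * m + 2)" using A1 m0 by (intro mult_right_mono) auto
    finally show ?thesis .
  next
    case False
    have "g * (1 + r) \<le> m * (1 + r)" using gm r by (intro mult_right_mono) auto
    also have "\<dots> \<le> (r - m) * (2 * m + 2)"
    proof -
      have "(r - m) * (2 * m + 2) - m * (1 + r) = (r - 2 * m - 1) * (m + 2) + 2 * m + 2"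
        by (simp add: algebra_simps)
      moreover have "(r - 2 * m - 1) * (m + 2) \<ge> 0" using False m0 by simp
      ultimately show ?thesis using m0 by linarith
    qed
    also have "\<dots> \<le> A * (2 * m + 2)" using A2 m0 by (intro mult_right_mono) auto
    finally show ?thesis .
  qed
  have "g / (2 * m + 2) * (1 + r) = g * (1 + r) / (2 * m + 2)" by simp
  also have "\<dots> \<le> A" using key m0 by (simp add: divide_le_eq)
  finally show ?thesis by (simp add: g_def m_def A_def)
qed

lemma ratio_bd:
  fixes w :: complex and rs :: "real list" and c :: real
  assumes "\<forall>r\<in>set rs. r \<ge> 0" "c = max \<bar>Im w\<bar> (Re w) / (2 * cmod w + 2)"
  shows "cmod (\<Prod>r\<leftarrow>rs. of_real r + w) \<ge> c ^ length rs * cmod (\<Prod>r\<leftarrow>rs. of_real r + 1)"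
  using assms(1)
proof (induction rs)
  case Nil then show ?case by simp
next
  case (Cons r rs)
  have c0: "c \<ge> 0" using assms(2) by simp
  have r: "r \<ge> 0" using Cons by simp
  have e1: "cmod (complex_of_real r + 1) = 1 + r"
  proof -
    have "complex_of_real r + 1 = complex_of_real (r + 1)" by simp
    then show ?thesis using r by (simp only: norm_of_real; simp)
  qed
  have "c ^ length (r # rs) * cmod (\<Prod>x\<leftarrow>r # rs. of_real x + 1)
      = (c * (1 + r)) * (c ^ length rs * cmod (\<Prod>x\<leftarrow>rs. of_real x + 1))"
    using r by (simp add: norm_mult e1)
  also have "\<dots> \<le> cmod (of_real r + w) * cmod (\<Prod>x\<leftarrow>rs. of_real x + w)"
    using pointwise_bd[OF r, of w] Cons c0 r assms(2)
    by (intro mult_mono) auto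
  also have "\<dots> = cmod (\<Prod>x\<leftarrow>r # rs. of_real x + w)" by (simp add: norm_mult)
  finally show ?case .
qed



definition Pe :: "(nat \<Rightarrow> real) \<Rightarrow> nat \<Rightarrow> real \<Rightarrow> real poly" where
  "Pe a n e = (\<Prod>j<n. [:a j + real (Suc j) * e, 1:])"

lemma coeff_mult_lin: fixes X :: "real poly" shows "coeff (X * [:c, 1:]) i = c * coeff X i + (if i = 0 then 0 else coeff X (i - 1))"
  by (cases i) (simp_all add: coeff_pCons)

lemma coeff_cont: "continuous (at x) (\<lambda>e. coeff (Pe a n e) i)"
proof (induction n arbitrary: i)
  case 0 then show ?case by (simp add: Pe_def)
next
  case (Suc n)
  have eq: "coeff (Pe a (Suc n) e) i = (a n + real (Suc n) * e) * coeff (Pe a n e) i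
      + (if i = 0 then 0 else coeff (Pe a n e) (i - 1))" for e
    unfolding Pe_def prod.lessThan_Suc by (rule coeff_mult_lin)
  show ?case unfolding eq using Suc by (cases "i = 0") (auto intro!: continuous_intros)
qed

lemma degree_Pe: "degree (Pe a n e) \<le> n"
proof -
  have "degree (Pe a n e) \<le> sum (degree \<circ> (\<lambda>j. [:a j + real (Suc j) * e, 1:])) {..<n}"
    unfolding Pe_def by (rule degree_prod_sum_le) simp
  also have "\<dots> = n" by simp
  finally show ?thesis .
qed

lemma degree_Tr_le: "degree P \<le> n \<Longrightarrow> degree (Tr s t w P) \<le> n"
  by (intro degree_le) (simp add: coeff_Tr coeff_eq_0)

lemma poly_sum_n:
  fixes p :: "'a::comm_semiring_1 poly"
  assumes "degree p \<le> n" shows "poly p z = (\<Sum>i\<le>n. coeff p i * z ^ i)"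
proof -
  have "poly p z = (\<Sum>i\<le>degree p. coeff p i * z ^ i)" by (rule poly_altdef)
  also have "\<dots> = (\<Sum>i\<le>n. coeff p i * z ^ i)"
    by (rule sum.mono_neutral_left) (use assms in \<open>auto simp: coeff_eq_0\<close>)
  finally show ?thesis .
qed

lemma cont_eval: "continuous (at x) (\<lambda>e. poly (map_poly (of_real :: real \<Rightarrow> complex) (Tr s t w (Pe a n e))) z)"
proof -
  have eq: "poly (map_poly (of_real :: real \<Rightarrow> complex) (Tr s t w (Pe a n e))) z =
     (\<Sum>i\<le>n. of_real ((s + w * real i) * coeff (Pe a n e) i + (real i + 1) * (t + real i) * coeff (Pe a n e) (Suc i)) * z ^ i)" for e
    by (subst poly_sum_n[where n=n]) (simp_all add: mp_degree degree_Tr_le degree_Pe coeff_map_poly coeff_Tr)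
  show ?thesis unfolding eq by (intro continuous_intros coeff_cont)
qed

lemma prod_nth_conv: "(\<Prod>r\<leftarrow>xs. f r) = (\<Prod>j<length xs. f (xs ! j))"
  by (induction xs) (simp_all add: prod.lessThan_Suc_shift del: prod.lessThan_Suc)

lemma prod_sort: "(\<Prod>r\<leftarrow>xs. (f r :: 'a :: comm_monoid_mult)) = (\<Prod>r\<leftarrow>sort xs. f r)"
  by (metis mset_map mset_sort prod_mset_prod_list)



lemma poly_lin_list: "poly (\<Prod>r\<leftarrow>rs. [:complex_of_real r, 1:]) z = (\<Prod>r\<leftarrow>rs. of_real r + z)"
  by (induction rs) (simp_all del: mult_pCons_left mult_pCons_right)

lemma main_real:
  fixes rs :: "real list" and s t w :: real and z :: complex
  assumes rs: "\<forall>r\<in>set rs. r \<ge> 0" and st: "s \<ge> 0" "t \<ge> 0" "w \<ge> 0"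
    and Q0: "Tr s t w (\<Prod>r\<leftarrow>rs. [:r, 1:]) \<noteq> 0"
    and z: "poly (map_poly of_real (Tr s t w (\<Prod>r\<leftarrow>rs. [:r, 1:]))) z = 0"
  shows "Im z = 0 \<and> Re z \<le> 0"
proof (rule ccontr)
  assume bad: "\<not> (Im z = 0 \<and> Re z \<le> 0)"
  define n where "n = length rs"
  define xs where "xs = sort rs"
  define a where "a = (\<lambda>j. xs ! j)"
  have Peq: "(\<Prod>r\<leftarrow>rs. [:r, 1:]) = Pe a n 0"
  proof -
    have "(\<Prod>r\<leftarrow>rs. [:r, 1:]) = (\<Prod>r\<leftarrow>sort rs. [:r, 1:])" by (rule prod_sort)
    also have "\<dots> = (\<Prod>j<length (sort rs). [:sort rs ! j, 1:])" by (rule prod_nth_conv)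
    finally show ?thesis unfolding Pe_def a_def n_def xs_def by simp
  qed
  have a_mono: "a i \<le> a j" if "i \<le> j" "j < n" for i j
    using that unfolding a_def xs_def n_def by (intro sorted_nth_mono) auto
  have a_nn: "a j \<ge> 0" if "j < n" for j
  proof -
    have "a j \<in> set rs" using that unfolding a_def xs_def n_def by (metis length_sort nth_mem set_sort)
    then show ?thesis using rs by auto
  qed
  define g where "g = max \<bar>Im z\<bar> (Re z)"
  define c where "c = g / (2 * cmod z + 2)"
  have g0: "g > 0" using bad unfolding g_def by auto
  have gm: "g \<le> cmod z" unfolding g_def using abs_Im_le_cmod complex_Re_le_cmod by auto
  have c0: "c > 0" unfolding c_def using g0 by (simp add: add_nonneg_pos)
  have c1: "c \<le> 1" unfolding c_def using gm g0 by (simp add: divide_le_eq)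
  define F where "F e = cmod (poly (map_poly of_real (Tr s t w (Pe a n e))) z)
      - c ^ n * cmod (poly (map_poly (of_real :: real \<Rightarrow> complex) (Tr s t w (Pe a n e))) 1)" for e
  have Fpos: "F e \<ge> 0" if e: "e > 0" for e
  proof -
    define b where "b j = a j + real (Suc j) * e" for j
    have bm: "b i < b j" if "i < j" "j < n" for i j
    proof -
      have "a i \<le> a j" using a_mono that by simp
      moreover have "real (Suc i) * e < real (Suc j) * e" using that e by simp
      ultimately show ?thesis unfolding b_def by simp
    qed
    have bp: "b j > 0" if "j < n" for j
      using a_nn[OF that] e unfolding b_def by (simp add: add_nonneg_pos)
    have PeB: "Pe a n e = (\<Prod>j<n. [:b j, 1:])" unfolding Pe_def b_def ..
    obtain S where S: "finite S" "card S \<ge> n - 1" "\<forall>x\<in>S. poly (Tr s t w (Pe a n e)) x = 0"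
      using simple_roots[of n b s t w, OF bm bp st] unfolding PeB by blast
    define Qe where "Qe = Tr s t w (Pe a n e)"
    show ?thesis
    proof (cases "Qe = 0")
      case True then show ?thesis unfolding F_def Qe_def[symmetric] by simp
    next
      case False
      have nnQ: "nn Qe" unfolding Qe_def PeB
        by (intro nn_Tr nn_prod st) (use bp in \<open>auto intro: less_imp_le\<close>)
      have dQ: "degree Qe \<le> n" unfolding Qe_def by (intro degree_Tr_le degree_Pe)
      have roots: "Im y = 0 \<and> Re y \<le> 0" if "poly (map_poly of_real Qe) y = 0" for y
        by (rule real_roots_all[OF False nnQ dQ S(1) S(2)]) (use S(3) that in \<open>auto simp: Qe_def\<close>)
      have mq0: "map_poly (of_real :: real \<Rightarrow> complex) Qe \<noteq> 0" using False by (simp add: mp_eq0)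
      obtain C rs' where rs': "\<forall>r\<in>set rs'. r \<ge> 0" "length rs' = degree (map_poly (of_real :: real \<Rightarrow> complex) Qe)"
        "map_poly of_real Qe = smult C (\<Prod>r\<leftarrow>rs'. [:complex_of_real r, 1:])"
        using roots_to_Pplus[OF mq0 roots] by blast
      have len: "length rs' \<le> n" using rs'(2) dQ by (simp add: mp_degree)
      have "c ^ n * cmod (\<Prod>r\<leftarrow>rs'. of_real r + 1) \<le> c ^ length rs' * cmod (\<Prod>r\<leftarrow>rs'. of_real r + 1)"
        by (intro mult_right_mono power_decreasing len) (use c0 c1 in auto)
      also have "\<dots> \<le> cmod (\<Prod>r\<leftarrow>rs'. of_real r + z)"
        by (rule ratio_bd[OF rs'(1)]) (simp add: c_def g_def)
      finally have "cmod C * (c ^ n * cmod (\<Prod>r\<leftarrow>rs'. of_real r + 1)) \<le> cmod C * cmod (\<Prod>r\<leftarrow>rs'. of_real r + z)"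
        by (intro mult_left_mono) auto
      then show ?thesis unfolding F_def Qe_def[symmetric] rs'(3)
        by (simp add: poly_lin_list norm_mult algebra_simps del: mult_pCons_left mult_pCons_right)
    qed
  qed
  have cont: "continuous (at 0) F" unfolding F_def by (intro continuous_intros cont_eval)
  then have "(F \<longlongrightarrow> F 0) (at_right 0)"
    using continuous_at_imp_continuous_at_within continuous_within by blast
  then have F0: "F 0 \<ge> 0"
    by (rule tendsto_lowerbound) (auto intro: eventually_mono[OF eventually_at_right_less] Fpos)
  define Q where "Q = Tr s t w (\<Prod>r\<leftarrow>rs. [:r, 1:])"
  have "F 0 = 0 - c ^ n * cmod (poly (map_poly (of_real :: real \<Rightarrow> complex) Q) 1)"
    unfolding F_def Q_def Peq[symmetric] using z by simp
  also have "poly (map_poly (of_real :: real \<Rightarrow> complex) Q) 1 = of_real (poly Q 1)"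
    using mp_poly[of Q 1] by simp
  finally have "c ^ n * \<bar>poly Q 1\<bar> \<le> 0" using F0 by simp
  moreover have "poly Q 1 > 0"
  proof (rule nn_pos)
    show "nn Q" unfolding Q_def Peq Pe_def
      by (intro nn_Tr nn_prod st) (use a_nn in simp)
  qed (use Q0 in \<open>auto simp: Q_def\<close>)
  ultimately show False using zero_less_power[OF c0, of n] by (simp add: mult_le_0_iff)
qed


lemma mp_lin_list: "map_poly (of_real :: real \<Rightarrow> complex) (\<Prod>r\<leftarrow>rs. [:r, 1:]) = (\<Prod>r\<leftarrow>rs. [:complex_of_real r, 1:])"
  by (induction rs) (simp_all add: mp_mult mp_pCons del: mult_pCons_left mult_pCons_right)

theorem lemma3:
  fixes \<sigma> \<theta> \<omega> :: real and p :: "complex poly"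
  assumes "\<sigma> \<ge> 0" and "\<theta> \<ge> 0" and "\<omega> \<ge> 0" and "p \<in> Pplus"
  shows "smult (complex_of_real \<sigma>) p + Delta \<theta> \<omega> p \<in> Pplus"
proof -
  from assms(4) obtain C rs where rs: "\<forall>r\<in>set rs. r \<ge> 0"
    and p: "p = smult C (\<Prod>r\<leftarrow>rs. [:complex_of_real r, 1:])"
    unfolding Pplus_def by blast
  define P where "P = (\<Prod>r\<leftarrow>rs. [:r, 1:])"
  define Q where "Q = Tr \<sigma> \<theta> \<omega> P"
  have p2: "p = smult C (map_poly of_real P)" unfolding p P_def mp_lin_list ..
  have q: "smult (complex_of_real \<sigma>) p + Delta \<theta> \<omega> p = smult C (map_poly of_real Q)"
    unfolding p2 Q_def by (rule Tr_commute)
  show ?thesis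
  proof (cases "Q = 0")
    case True
    then show ?thesis unfolding q Pplus_def by (intro CollectI exI[of _ 0] exI[of _ "[]"]) simp
  next
    case False
    have mq0: "map_poly (of_real :: real \<Rightarrow> complex) Q \<noteq> 0" using False by (simp add: mp_eq0)
    have roots: "Im z = 0 \<and> Re z \<le> 0" if "poly (map_poly of_real Q) z = 0" for z
      using main_real[OF rs assms(1-3)] False that unfolding Q_def P_def by blast
    obtain C' rs' where rs': "\<forall>r\<in>set rs'. r \<ge> 0"
      "map_poly of_real Q = smult C' (\<Prod>r\<leftarrow>rs'. [:complex_of_real r, 1:])"
      using roots_to_Pplus[OF mq0 roots] by blast
    show ?thesis unfolding q Pplus_def rs'(2)
      by (intro CollectI exI[of _ "C * C'"] exI[of _ rs']) (use rs'(1) in simp)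
  qed
qed

end
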